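(* Let $\mathbf{F}=F(\mathcal{R}[t,t^{-1}])$, let $k>1$ and $d=2^{k-2}$. If $g\in\mathbf{F}^{(k)}$, the $k$-th derived subgroup of $\mathbf{F}$, then $g=I+\sum_{i\ge d}(t-1)^iA_i$ with $A_i\in M_2(\mathcal{R})$, and all entries of $A_i$ lie in $\Sigma^{2d}$ for every $i\ge d$.
   Context: $\mathcal{R}=\mathbb{Z}[x,x^{-1},y,y^{-1}]$; $\Sigma$ is the augmentation ideal of $\mathcal{R}$ (kernel of $x,y\mapsto1$ to $\mathbb{Z}$). $F(\mathcal{R}[t,t^{-1}])$ is the subgroup of $GL_2(\mathcal{R}[t,t^{-1}])$ generated by $M_1=\begin{pmatrix}1&1-y\\0&x\end{pmatrix}$ and $M_2T=\begin{pmatrix}yt&0\\1-xt&1\end{pmatrix}$. Via $t=1+s$, $t^{-1}=\sum_{i\ge0}(-s)^i$, $\mathcal{R}[t,t^{-1}]$ embeds in $\mathcal{R}[[s]]$, giving each matrix over $\mathcal{R}[t,t^{-1}]$ a unique expansion $\sum_{i\ge0}(t-1)^iA_i$ with $A_i$ matrices over $\mathcal{R}$. Derived series: $\mathbf{F}^{(1)}=\mathbf{F}'$, $\mathbf{F}^{(k+1)}=[\mathbf{F}^{(k)},\mathbf{F}^{(k)}]$. *)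

theory Defs
  imports "HOL-Analysis.Finite_Cartesian_Product" "HOL-Library.Poly_Mapping"
    "HOL-Library.Product_Plus"
    "HOL-Computational_Algebra.Formal_Power_Series" "HOL-Algebra.Solvable_Groups"
begin

text \<open>The ring R = Z[x,x^-1,y,y^-1] as the integral group ring of Z^2:
  finitely supported functions Z x Z -> Z with convolution product.
  The monomial x^a y^b is Poly_Mapping.single (a,b) 1.\<close>
type_synonym R = "(int \<times> int) \<Rightarrow>\<^sub>0 int"

definition xR :: R where "xR = Poly_Mapping.single (1,0) 1"
definition yR :: R where "yR = Poly_Mapping.single (0,1) 1"

text \<open>Augmentation map x,y -> 1 and augmentation ideal Sigma.\<close>
definition augR :: "R \<Rightarrow> int" where
  "augR p = (\<Sum>m\<in>Poly_Mapping.keys p. Poly_Mapping.lookup p m)"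

definition Sigma_ideal :: "R set" where
  "Sigma_ideal = {p. augR p = 0}"

text \<open>Powers of an ideal: I^0 = R, I^(n+1) = I^n * I (finite sums of products).\<close>
fun ideal_power :: "'a::comm_ring_1 set \<Rightarrow> nat \<Rightarrow> 'a set" where
  "ideal_power I 0 = UNIV"
| "ideal_power I (Suc n) =
     {(\<Sum>j<m. a j * b j) | (m::nat) a b. \<forall>j<m. a j \<in> ideal_power I n \<and> b j \<in> I}"

text \<open>The Laurent polynomial ring R[t,t^-1] as finitely supported functions Z -> R;
  t^n * r is Poly_Mapping.single n r.\<close>
type_synonym RT = "int \<Rightarrow>\<^sub>0 R"

definition tT :: RT where "tT = Poly_Mapping.single 1 1"
definition constT :: "R \<Rightarrow> RT" where "constT r = Poly_Mapping.single 0 r"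

text \<open>Embedding R[t,t^-1] -> R[[s]] via t = 1 + s, t^-1 = sum_i (-s)^i.\<close>
definition tinv_fps :: "R fps" where "tinv_fps = Abs_fps (\<lambda>i. (-1) ^ i)"

definition tpow_fps :: "int \<Rightarrow> R fps" where
  "tpow_fps n = (if 0 \<le> n then (1 + fps_X) ^ nat n else tinv_fps ^ nat (- n))"

definition embed_fps :: "RT \<Rightarrow> R fps" where
  "embed_fps p = (\<Sum>n\<in>Poly_Mapping.keys p. fps_const (Poly_Mapping.lookup p n) * tpow_fps n)"

text \<open>2x2 matrices.\<close>
definition mat2 :: "'a \<Rightarrow> 'a \<Rightarrow> 'a \<Rightarrow> 'a \<Rightarrow> 'a^2^2" where
  "mat2 a b c d = (\<chi> i j. if i = 1 then (if j = 1 then a else b) else (if j = 1 then c else d))"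

text \<open>GL_2 over a commutative ring, as a monoid structure (invertible matrices).\<close>
definition GL2 :: "('a::comm_ring_1^2^2) monoid" where
  "GL2 = \<lparr>carrier = {A. \<exists>B. A ** B = mat 1 \<and> B ** A = mat 1},
          mult = (**), one = mat 1\<rparr>"

definition M1 :: "RT^2^2" where
  "M1 = mat2 1 (constT (1 - yR)) 0 (constT xR)"

definition M2T :: "RT^2^2" where
  "M2T = mat2 (constT yR * tT) 0 (1 - constT xR * tT) 1"

text \<open>The group F(R[t,t^-1]) generated by M1 and M2T inside GL_2(R[t,t^-1]).\<close>
definition Fgrp :: "(RT^2^2) set" where
  "Fgrp = generate GL2 {M1, M2T}"

text \<open>k-th derived subgroup F^(k) (F^(0) = F).\<close>
definition Fderived :: "nat \<Rightarrow> (RT^2^2) set" where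
  "Fderived k = (derived GL2 ^^ k) Fgrp"

text \<open>The coefficient matrix A_i of (t-1)^i in the expansion g = sum_i (t-1)^i A_i.\<close>
definition coeff_mat :: "RT^2^2 \<Rightarrow> nat \<Rightarrow> R^2^2" where
  "coeff_mat g i = (\<chi> a b. fps_nth (embed_fps (g $ a $ b)) i)"

end

theory Submission imports Defs "HOL-Analysis.Determinants" begin

section \<open>Poly mapping homomorphisms\<close>

lemma pm_decomp: "p = (\<Sum>k\<in>Poly_Mapping.keys p. Poly_Mapping.single k (Poly_Mapping.lookup p k))"
proof (rule poly_mapping_eqI)
  fix i
  show "Poly_Mapping.lookup p i = Poly_Mapping.lookup (\<Sum>k\<in>Poly_Mapping.keys p. Poly_Mapping.single k (Poly_Mapping.lookup p k)) i"
    by (simp add: lookup_sum lookup_single when_def in_keys_iff)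
qed

lemma hom_sum:
  fixes f :: "'a::comm_monoid_add \<Rightarrow> 'b::comm_monoid_add"
  assumes add: "\<And>p q. f (p + q) = f p + f q" and z: "f 0 = 0"
  shows "finite S \<Longrightarrow> f (\<Sum>k\<in>S. g k) = (\<Sum>k\<in>S. f (g k))"
  by (induction S rule: finite_induct) (simp_all add: add z)

lemma hom_mult:
  fixes f :: "('a::comm_monoid_add \<Rightarrow>\<^sub>0 'b::comm_ring_1) \<Rightarrow> 'c::comm_ring_1"
  assumes add: "\<And>p q. f (p + q) = f p + f q"
    and sing: "\<And>k l a b. f (Poly_Mapping.single k a * Poly_Mapping.single l b)
                 = f (Poly_Mapping.single k a) * f (Poly_Mapping.single l b)"
  shows "f (p * q) = f p * f q"
proof -
  have z: "f 0 = 0" using add[of 0 0] by simp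
  let ?S = "\<lambda>p k. Poly_Mapping.single k (Poly_Mapping.lookup p k)"
  have "p * q = (\<Sum>k\<in>Poly_Mapping.keys p. ?S p k) * (\<Sum>l\<in>Poly_Mapping.keys q. ?S q l)"
    using pm_decomp[of p] pm_decomp[of q] by simp
  also have "\<dots> = (\<Sum>k\<in>Poly_Mapping.keys p. \<Sum>l\<in>Poly_Mapping.keys q. ?S p k * ?S q l)"
    by (simp add: sum_product)
  finally have "f (p * q) = (\<Sum>k\<in>Poly_Mapping.keys p. \<Sum>l\<in>Poly_Mapping.keys q. f (?S p k * ?S q l))"
    by (simp add: hom_sum[OF add z])
  also have "\<dots> = (\<Sum>k\<in>Poly_Mapping.keys p. \<Sum>l\<in>Poly_Mapping.keys q. f (?S p k) * f (?S q l))"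
    by (simp add: sing)
  also have "\<dots> = (\<Sum>k\<in>Poly_Mapping.keys p. f (?S p k)) * (\<Sum>l\<in>Poly_Mapping.keys q. f (?S q l))"
    by (simp add: sum_product)
  also have "\<dots> = f p * f q"
    using pm_decomp[of p] pm_decomp[of q] by (simp add: hom_sum[OF add z, symmetric])
  finally show ?thesis .
qed

section \<open>tpow\<close>

lemma tinv_mult: "(1 + fps_X) * tinv_fps = 1"
proof (rule fps_ext)
  fix n
  show "fps_nth ((1 + fps_X) * tinv_fps) n = fps_nth (1::R fps) n"
    by (cases n) (simp_all add: distrib_right tinv_fps_def)
qed

lemma uv_pow: "(1 + fps_X) ^ a * tinv_fps ^ b =
   (if b \<le> a then (1 + fps_X) ^ (a - b) else tinv_fps ^ (b - a) :: R fps)"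
proof (cases "b \<le> a")
  case True
  have "(1 + fps_X) ^ a = (1 + fps_X) ^ (a - b) * ((1 + fps_X) ^ b :: R fps)"
    using True by (metis le_add_diff_inverse2 power_add)
  then have "(1 + fps_X) ^ a * tinv_fps ^ b = (1 + fps_X) ^ (a - b) * ((1 + fps_X) ^ b * tinv_fps ^ b :: R fps)"
    by (simp add: mult.assoc)
  also have "\<dots> = (1 + fps_X) ^ (a - b)" by (simp add: power_mult_distrib[symmetric] tinv_mult)
  finally show ?thesis using True by simp
next
  case False
  have "tinv_fps ^ b = tinv_fps ^ a * (tinv_fps ^ (b - a) :: R fps)"
    using False by (metis le_add_diff_inverse nat_le_linear power_add)
  then have "(1 + fps_X) ^ a * tinv_fps ^ b = ((1 + fps_X) ^ a * tinv_fps ^ a) * (tinv_fps ^ (b - a) :: R fps)"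
    by (simp add: mult.assoc)
  also have "\<dots> = tinv_fps ^ (b - a)" by (simp add: power_mult_distrib[symmetric] tinv_mult)
  finally show ?thesis using False by simp
qed

lemma tpow_add: "tpow_fps (k + l) = tpow_fps k * tpow_fps l"
proof -
  consider "0 \<le> k" "0 \<le> l" | "0 \<le> k" "l < 0" | "k < 0" "0 \<le> l" | "k < 0" "l < 0" by linarith
  then show ?thesis
  proof cases
    case 1 then show ?thesis by (simp add: tpow_fps_def nat_add_distrib power_add)
  next
    case 2
    then have "tpow_fps k * tpow_fps l = (1 + fps_X) ^ nat k * tinv_fps ^ nat (-l)"
      by (simp add: tpow_fps_def)
    also have "\<dots> = tpow_fps (k + l)"
    proof -
      have "nat k - nat (-l) = nat (k+l)" "nat (-l) - nat k = nat (-k-l)" using 2 by auto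
      then show ?thesis unfolding uv_pow using 2 by (auto simp: tpow_fps_def)
    qed
    finally show ?thesis by simp
  next
    case 3
    then have "tpow_fps k * tpow_fps l = (1 + fps_X) ^ nat l * tinv_fps ^ nat (-k)"
      by (simp add: tpow_fps_def mult.commute)
    also have "\<dots> = tpow_fps (k + l)"
    proof -
      have "nat l - nat (-k) = nat (k+l)" "nat (-k) - nat l = nat (-k-l)" using 3 by auto
      then show ?thesis unfolding uv_pow using 3 by (auto simp: tpow_fps_def)
    qed
    finally show ?thesis by simp
  next
    case 4
    then have "nat (-k-l) = nat (-k) + nat (-l)" by auto
    then show ?thesis using 4 by (simp add: tpow_fps_def power_add)
  qed
qed

section \<open>embed and aug are ring homomorphisms\<close>

lemma embed_add: "embed_fps (p + q) = embed_fps p + embed_fps q"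
  unfolding embed_fps_def
  by (rule setsum_keys_plus_distrib) (simp_all add: distrib_right fps_const_add[symmetric] del: fps_const_add)

lemma embed_single: "embed_fps (Poly_Mapping.single k a) = fps_const a * tpow_fps k"
  by (simp add: embed_fps_def)

lemma embed_mult: "embed_fps (p * q) = embed_fps p * embed_fps q"
  by (rule hom_mult[OF embed_add]) (simp add: mult_single embed_single tpow_add mult_ac)

lemma embed_0: "embed_fps 0 = 0" using embed_add[of 0 0] by simp

lemma embed_1: "embed_fps 1 = 1"
  using embed_single[of 0 1] by (simp add: tpow_fps_def)

lemma embed_uminus: "embed_fps (- p) = - embed_fps p"
  using embed_add[of p "-p"] by (simp add: embed_0 minus_unique)

lemma embed_diff: "embed_fps (p - q) = embed_fps p - embed_fps q"
  using embed_add[of p "-q"] by (simp add: embed_uminus)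

lemma aug_add: "augR (p + q) = augR p + augR q"
  unfolding augR_def
  by (rule setsum_keys_plus_distrib) simp_all

lemma aug_single: "augR (Poly_Mapping.single k a) = a"
  by (simp add: augR_def)

lemma aug_mult: "augR (p * q) = augR p * augR q"
  by (rule hom_mult[OF aug_add]) (simp add: mult_single aug_single)

lemma aug_0: "augR 0 = 0" using aug_add[of 0 0] by simp

lemma aug_1: "augR 1 = 1"
  using aug_single[of 0 1] by simp

lemma aug_uminus: "augR (- p) = - augR p"
  using aug_add[of p "-p"] by (simp add: aug_0 minus_unique)

lemma aug_diff: "augR (p - q) = augR p - augR q"
  using aug_add[of p "-q"] by (simp add: aug_uminus)

lemma aug_sum: "finite S \<Longrightarrow> augR (\<Sum>k\<in>S. g k) = (\<Sum>k\<in>S. augR (g k))"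
  by (rule hom_sum[OF aug_add aug_0])

lemma aug_x: "augR xR = 1" by (simp add: xR_def aug_single)
lemma aug_y: "augR yR = 1" by (simp add: yR_def aug_single)

definition piF :: "R fps \<Rightarrow> int fps" where
  "piF f = Abs_fps (\<lambda>i. augR (fps_nth f i))"

lemma piF_nth: "fps_nth (piF f) i = augR (fps_nth f i)"
  by (simp add: piF_def)

lemma piF_add: "piF (f + g) = piF f + piF g"
  by (rule fps_ext) (simp add: piF_nth aug_add)
lemma piF_diff: "piF (f - g) = piF f - piF g"
  by (rule fps_ext) (simp add: piF_nth aug_diff)
lemma piF_mult: "piF (f * g) = piF f * piF g"
  by (rule fps_ext) (simp add: piF_nth fps_mult_nth aug_sum aug_mult)
lemma piF_1: "piF 1 = 1"
  by (rule fps_ext) (simp add: piF_nth aug_1 aug_0)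
lemma piF_0: "piF 0 = 0"
  by (rule fps_ext) (simp add: piF_nth aug_0)
lemma piF_const: "piF (fps_const r) = fps_const (augR r)"
  by (rule fps_ext) (simp add: piF_nth aug_0)
lemma piF_X: "piF fps_X = fps_X"
  by (rule fps_ext) (simp add: piF_nth aug_0 aug_1)

section \<open>2x2 matrices\<close>

lemma two_ne: "(1::2) \<noteq> 2" by simp

lemma mat2_nth [simp]:
  "mat2 a b c d $ 1 $ 1 = a" "mat2 a b c d $ 1 $ 2 = b"
  "mat2 a b c d $ 2 $ 1 = c" "mat2 a b c d $ 2 $ 2 = d"
  by (simp_all add: mat2_def)

lemma mat2_eqI: "A $ 1 $ 1 = a \<Longrightarrow> A $ 1 $ 2 = b \<Longrightarrow> A $ 2 $ 1 = c \<Longrightarrow> A $ 2 $ 2 = d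
  \<Longrightarrow> A = mat2 a b c d"
  unfolding vec_eq_iff forall_2 by simp

lemma mat2_eta: "A = mat2 (A$1$1) (A$1$2) (A$2$1) (A$2$2)"
  by (rule mat2_eqI) simp_all

lemma mat2_eq_iff: "mat2 a b c d = mat2 a' b' c' d' \<longleftrightarrow> a = a' \<and> b = b' \<and> c = c' \<and> d = d'"
  by (metis mat2_nth)

lemma mat2_mult: "mat2 a b c d ** mat2 a' b' c' d' = mat2 (a*a'+b*c') (a*b'+b*d') (c*a'+d*c') (c*b'+d*d')"
  by (rule mat2_eqI) (simp_all add: matrix_matrix_mult_def sum_2)

lemma mat2_one: "(mat 1 :: 'a::comm_ring_1^2^2) = mat2 1 0 0 1"
  by (rule mat2_eqI) (simp_all add: mat_def)

lemma mat2_diff: "mat2 a b c d - mat2 a' b' c' d' = mat2 (a-a') (b-b') (c-c') (d-d')"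
  by (rule mat2_eqI) simp_all

lemma mat2_add: "mat2 a b c d + mat2 a' b' c' d' = mat2 (a+a') (b+b') (c+c') (d+d')"
  by (rule mat2_eqI) simp_all

definition MapM :: "('a \<Rightarrow> 'b) \<Rightarrow> 'a^2^2 \<Rightarrow> 'b^2^2" where
  "MapM f A = (\<chi> i j. f (A $ i $ j))"

lemma MapM_nth [simp]: "MapM f A $ i $ j = f (A $ i $ j)"
  by (simp add: MapM_def)

lemma MapM_mat2: "MapM f (mat2 a b c d) = mat2 (f a) (f b) (f c) (f d)"
  by (rule mat2_eqI) simp_all

lemma MapM_mult:
  assumes "\<And>a b. f (a + b) = f a + f b" "\<And>a b. f (a * b) = f a * f b"
  shows "MapM f (A ** B) = MapM f A ** MapM f B"
  by (simp add: vec_eq_iff matrix_matrix_mult_def sum_2 assms)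

lemma MapM_one:
  assumes "f 0 = 0" "f 1 = 1"
  shows "MapM f (mat 1) = mat 1"
  by (auto simp: vec_eq_iff mat_def assms)

lemma MapM_diff:
  assumes "\<And>a b. f (a - b) = f a - f b"
  shows "MapM f (A - B) = MapM f A - MapM f B"
  by (simp add: vec_eq_iff assms)

section \<open>GL2 is a group\<close>

lemma GL2_group: "group (GL2 :: ('a::comm_ring_1^2^2) monoid)"
proof (rule groupI)
  fix x y :: "'a^2^2"
  assume x: "x \<in> carrier GL2" and y: "y \<in> carrier GL2"
  then obtain x' y' where "x ** x' = mat 1" "x' ** x = mat 1" "y ** y' = mat 1" "y' ** y = mat 1"
    by (auto simp: GL2_def)
  then have "(x ** y) ** (y' ** x') = mat 1" "(y' ** x') ** (x ** y) = mat 1"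
    by (metis matrix_mul_assoc matrix_mul_lid)+
  then show "x \<otimes>\<^bsub>GL2\<^esub> y \<in> carrier GL2" by (auto simp: GL2_def)
next
  show "\<one>\<^bsub>GL2\<^esub> \<in> carrier (GL2 :: ('a::comm_ring_1^2^2) monoid)"
    by (auto simp: GL2_def intro!: exI[of _ "mat 1"])
next
  fix x y z :: "'a^2^2"
  show "x \<otimes>\<^bsub>GL2\<^esub> y \<otimes>\<^bsub>GL2\<^esub> z = x \<otimes>\<^bsub>GL2\<^esub> (y \<otimes>\<^bsub>GL2\<^esub> z)"
    by (simp add: GL2_def matrix_mul_assoc)
next
  fix x :: "'a^2^2"
  show "\<one>\<^bsub>GL2\<^esub> \<otimes>\<^bsub>GL2\<^esub> x = x" by (simp add: GL2_def)
next
  fix x :: "'a^2^2"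
  assume "x \<in> carrier GL2"
  then obtain x' where "x ** x' = mat 1" "x' ** x = mat 1" by (auto simp: GL2_def)
  then show "\<exists>y\<in>carrier GL2. y \<otimes>\<^bsub>GL2\<^esub> x = \<one>\<^bsub>GL2\<^esub>"
    by (auto simp: GL2_def intro!: bexI[of _ x'])
qed

lemma GL2_monoid: "monoid (GL2 :: ('a::comm_ring_1^2^2) monoid)"
  using GL2_group group.is_monoid by blast

lemma GL2_mult [simp]: "x \<otimes>\<^bsub>GL2\<^esub> y = x ** y" by (simp add: GL2_def)
lemma GL2_one [simp]: "\<one>\<^bsub>GL2\<^esub> = mat 1" by (simp add: GL2_def)

lemma GL2_inv:
  assumes "(x :: 'a::comm_ring_1^2^2) \<in> carrier GL2"
  shows "x ** inv\<^bsub>GL2\<^esub> x = mat 1" "inv\<^bsub>GL2\<^esub> x ** x = mat 1"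
    "inv\<^bsub>GL2\<^esub> x \<in> carrier GL2"
  using group.r_inv[OF GL2_group assms] group.l_inv[OF GL2_group assms]
    group.inv_closed[OF GL2_group assms] by simp_all

definition Phi :: "RT^2^2 \<Rightarrow> R fps^2^2" where "Phi = MapM embed_fps"

lemma Phi_mult: "Phi (A ** B) = Phi A ** Phi B"
  unfolding Phi_def by (rule MapM_mult) (simp_all add: embed_add embed_mult)

lemma Phi_one: "Phi (mat 1) = mat 1"
  unfolding Phi_def by (rule MapM_one) (simp_all add: embed_0 embed_1)

definition SubQ :: "(R fps^2^2 \<Rightarrow> bool) \<Rightarrow> (RT^2^2) set" where
  "SubQ Q = {g \<in> carrier GL2. Q (Phi g)}"

lemma SubQ_subgroup:
  assumes one: "Q (mat 1)" and mult: "\<And>A B. Q A \<Longrightarrow> Q B \<Longrightarrow> Q (A ** B)"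
    and inv: "\<And>A B. Q A \<Longrightarrow> A ** B = mat 1 \<Longrightarrow> B ** A = mat 1 \<Longrightarrow> Q B"
  shows "subgroup (SubQ Q) GL2"
proof (rule group.subgroupI[OF GL2_group])
  show "SubQ Q \<subseteq> carrier GL2" by (auto simp: SubQ_def)
  have "mat 1 \<in> carrier (GL2 :: (RT^2^2) monoid)" using monoid.one_closed[OF GL2_monoid] by simp
  then show "SubQ Q \<noteq> {}" using one by (auto simp: SubQ_def Phi_one)
next
  fix a assume a: "a \<in> SubQ Q"
  then have c: "a \<in> carrier GL2" by (simp add: SubQ_def)
  show "inv\<^bsub>GL2\<^esub> a \<in> SubQ Q"
    using GL2_inv[OF c] a inv[of "Phi a" "Phi (inv\<^bsub>GL2\<^esub> a)"]
    by (simp add: SubQ_def Phi_mult[symmetric] Phi_one)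
next
  fix a b assume "a \<in> SubQ Q" "b \<in> SubQ Q"
  then show "a \<otimes>\<^bsub>GL2\<^esub> b \<in> SubQ Q"
    using monoid.m_closed[OF GL2_monoid, of a b] mult
    by (auto simp: SubQ_def Phi_mult)
qed

lemma derived_SubQ:
  assumes S: "S \<subseteq> SubQ Q" and sg: "subgroup (SubQ Q') GL2"
    and comm: "\<And>A B A' B'. Q A \<Longrightarrow> Q B \<Longrightarrow> A ** A' = mat 1 \<Longrightarrow> A' ** A = mat 1
       \<Longrightarrow> B ** B' = mat 1 \<Longrightarrow> B' ** B = mat 1 \<Longrightarrow> Q' (A ** B ** A' ** B')"
  shows "derived GL2 S \<subseteq> SubQ Q'"
  unfolding derived_def
proof (rule group.generate_subgroup_incl[OF GL2_group _ sg])
  show "derived_set GL2 S \<subseteq> SubQ Q'"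
  proof safe
    fix h1 h2 assume h: "h1 \<in> S" "h2 \<in> S"
    then have c: "h1 \<in> carrier GL2" "h2 \<in> carrier GL2" "Q (Phi h1)" "Q (Phi h2)"
      using S by (auto simp: SubQ_def)
    have cc: "h1 \<otimes>\<^bsub>GL2\<^esub> h2 \<otimes>\<^bsub>GL2\<^esub> inv\<^bsub>GL2\<^esub> h1 \<otimes>\<^bsub>GL2\<^esub> inv\<^bsub>GL2\<^esub> h2 \<in> carrier GL2"
      using c GL2_inv monoid.m_closed[OF GL2_monoid] by metis
    have "Q' (Phi h1 ** Phi h2 ** Phi (inv\<^bsub>GL2\<^esub> h1) ** Phi (inv\<^bsub>GL2\<^esub> h2))"
      apply (rule comm)
      using c GL2_inv[OF c(1)] GL2_inv[OF c(2)] by (simp_all add: Phi_mult[symmetric] Phi_one)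
    then show "h1 \<otimes>\<^bsub>GL2\<^esub> h2 \<otimes>\<^bsub>GL2\<^esub> inv\<^bsub>GL2\<^esub> h1 \<otimes>\<^bsub>GL2\<^esub> inv\<^bsub>GL2\<^esub> h2 \<in> SubQ Q'"
      using cc by (simp add: SubQ_def Phi_mult)
  qed
qed

section \<open>Ideals\<close>

definition idl :: "'a::comm_ring_1 set \<Rightarrow> bool" where
  "idl J \<longleftrightarrow> 0 \<in> J \<and> (\<forall>a\<in>J. \<forall>b\<in>J. a + b \<in> J) \<and> (\<forall>a\<in>J. - a \<in> J) \<and> (\<forall>a\<in>J. \<forall>r. r * a \<in> J)"

lemma idl_0: "idl J \<Longrightarrow> 0 \<in> J" by (simp add: idl_def)
lemma idl_add: "idl J \<Longrightarrow> a \<in> J \<Longrightarrow> b \<in> J \<Longrightarrow> a + b \<in> J" by (simp add: idl_def)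
lemma idl_uminus: "idl J \<Longrightarrow> a \<in> J \<Longrightarrow> - a \<in> J" by (simp add: idl_def)
lemma idl_diff: "idl J \<Longrightarrow> a \<in> J \<Longrightarrow> b \<in> J \<Longrightarrow> a - b \<in> J"
  using idl_add[of J a "-b"] idl_uminus[of J b] by simp
lemma idl_multl: "idl J \<Longrightarrow> a \<in> J \<Longrightarrow> r * a \<in> J" by (simp add: idl_def)
lemma idl_multr: "idl J \<Longrightarrow> a \<in> J \<Longrightarrow> a * r \<in> J" by (simp add: idl_def mult.commute)
lemma idl_sum: "idl J \<Longrightarrow> (\<And>i. i \<in> S \<Longrightarrow> f i \<in> J) \<Longrightarrow> sum f S \<in> J"
  by (induction S rule: infinite_finite_induct) (auto simp: idl_0 idl_add)

lemma ip_SucD: "x \<in> ideal_power I (Suc n) \<Longrightarrow>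
  \<exists>(m::nat) f g. x = (\<Sum>j<m. f j * g j) \<and> (\<forall>j<m. f j \<in> ideal_power I n \<and> g j \<in> I)"
  by simp

lemma ip_Suc_I: "a \<in> ideal_power I n \<Longrightarrow> b \<in> I \<Longrightarrow> a * b \<in> ideal_power I (Suc n)"
  by (simp, rule exI[of _ 1], auto)

lemma ip_Suc_add1:
  assumes x: "x \<in> ideal_power I (Suc n)" and a: "a \<in> ideal_power I n" and b: "b \<in> I"
  shows "x + a * b \<in> ideal_power I (Suc n)"
proof -
  from x obtain m :: nat and f g where x: "x = (\<Sum>j<m. f j * g j)" "\<forall>j<m. f j \<in> ideal_power I n \<and> g j \<in> I"
    using ip_SucD by blast
  show ?thesis
    apply simp
    apply (rule exI[of _ "Suc m"], rule exI[of _ "f(m := a)"], rule exI[of _ "g(m := b)"])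
    using x a b by (auto simp: less_Suc_eq)
qed

lemma ip_Suc_add:
  assumes x: "x \<in> ideal_power I (Suc n)" and y: "y \<in> ideal_power I (Suc n)"
  shows "x + y \<in> ideal_power I (Suc n)"
proof -
  from y obtain m :: nat and f g where y: "y = (\<Sum>j<m. f j * g j)" "\<forall>j<m. f j \<in> ideal_power I n \<and> g j \<in> I"
    using ip_SucD by blast
  have "\<forall>k\<le>m. x + (\<Sum>j<k. f j * g j) \<in> ideal_power I (Suc n)"
  proof (intro allI impI)
    fix k assume "k \<le> m"
    then show "x + (\<Sum>j<k. f j * g j) \<in> ideal_power I (Suc n)"
    proof (induction k)
      case 0 then show ?case using x by simp
    next
      case (Suc k)
      then have "x + (\<Sum>j<k. f j * g j) + f k * g k \<in> ideal_power I (Suc n)"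
        using y(2) by (intro ip_Suc_add1) auto
      then show ?case by (simp add: add.assoc)
    qed
  qed
  then show ?thesis using y by auto
qed

lemma idl_ideal_power: "idl I \<Longrightarrow> idl (ideal_power I n)"
proof (induction n)
  case 0 then show ?case by (simp add: idl_def)
next
  case (Suc n)
  have z: "0 \<in> ideal_power I (Suc n)" by (simp, rule exI[of _ 0], simp)
  have neg: "- x \<in> ideal_power I (Suc n)" if "x \<in> ideal_power I (Suc n)" for x
  proof -
    from that obtain m :: nat and f g where x: "x = (\<Sum>j<m. f j * g j)" "\<forall>j<m. f j \<in> ideal_power I n \<and> g j \<in> I"
      using ip_SucD by blast
    show ?thesis
      apply simp
      apply (rule exI[of _ m], rule exI[of _ "\<lambda>j. - f j"], rule exI[of _ g])
      using x idl_uminus[OF Suc.IH[OF Suc.prems]] by (auto simp: sum_negf)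
  qed
  have ml: "r * x \<in> ideal_power I (Suc n)" if "x \<in> ideal_power I (Suc n)" for x r
  proof -
    from that obtain m :: nat and f g where x: "x = (\<Sum>j<m. f j * g j)" "\<forall>j<m. f j \<in> ideal_power I n \<and> g j \<in> I"
      using ip_SucD by blast
    show ?thesis
      apply simp
      apply (rule exI[of _ m], rule exI[of _ "\<lambda>j. r * f j"], rule exI[of _ g])
      using x idl_multl[OF Suc.IH[OF Suc.prems]] by (auto simp: sum_distrib_left mult.assoc)
  qed
  show ?case unfolding idl_def using z neg ml ip_Suc_add by blast
qed

lemma ip_mult:
  assumes I: "idl I"
  shows "a \<in> ideal_power I m \<Longrightarrow> b \<in> ideal_power I n \<Longrightarrow> a * b \<in> ideal_power I (m + n)"
proof (induction n arbitrary: b)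
  case 0 then show ?case using idl_multr[OF idl_ideal_power[OF I]] by simp
next
  case (Suc n)
  from Suc.prems(2) obtain k :: nat and f g where b: "b = (\<Sum>j<k. f j * g j)" "\<forall>j<k. f j \<in> ideal_power I n \<and> g j \<in> I"
    using ip_SucD by blast
  have "a * b = (\<Sum>j<k. (a * f j) * g j)" by (simp add: b sum_distrib_left mult.assoc)
  also have "\<dots> \<in> ideal_power I (m + Suc n)"
  proof (rule idl_sum[OF idl_ideal_power[OF I]])
    fix i assume "i \<in> {..<k}"
    then have "a * f i * g i \<in> ideal_power I (Suc (m + n))"
      using b(2) Suc.IH[OF Suc.prems(1)] by (intro ip_Suc_I) auto
    then show "a * f i * g i \<in> ideal_power I (m + Suc n)" by (simp only: add_Suc_right)
  qed
  finally show ?case .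
qed

lemma ip_1: "a \<in> I \<Longrightarrow> a \<in> ideal_power I 1"
  using ip_Suc_I[of 1 I 0 a] by simp

lemma idl_Sigma: "idl Sigma_ideal"
  by (simp add: idl_def Sigma_ideal_def aug_0 aug_add aug_uminus aug_mult)

section \<open>Coefficientwise ideals of power series\<close>

definition CS :: "R set \<Rightarrow> R fps set" where "CS S = {f. \<forall>i. fps_nth f i \<in> S}"

lemma idl_CS: assumes S: "idl S" shows "idl (CS S)"
  unfolding idl_def CS_def
  using S by (auto simp: idl_0 idl_add idl_uminus fps_mult_nth intro!: idl_sum[OF S] idl_multl[OF S])

definition Jd :: "nat \<Rightarrow> R fps set" where
  "Jd d = {f. \<forall>i. fps_nth f i \<in> ideal_power Sigma_ideal (2*d) \<and> (i < d \<longrightarrow> fps_nth f i = 0)}"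

lemma idl_Jd: "idl (Jd d)"
proof -
  have I: "idl (ideal_power Sigma_ideal (2*d))" by (rule idl_ideal_power[OF idl_Sigma])
  have m: "r * f \<in> Jd d" if "f \<in> Jd d" for r f
  proof -
    { fix n
      have "fps_nth (r * f) n \<in> ideal_power Sigma_ideal (2*d)"
        using that by (auto simp: Jd_def fps_mult_nth intro!: idl_sum[OF I] idl_multl[OF I])
      moreover have "n < d \<Longrightarrow> fps_nth (r * f) n = 0"
        using that by (auto simp: Jd_def fps_mult_nth intro!: sum.neutral)
      ultimately have "fps_nth (r * f) n \<in> ideal_power Sigma_ideal (2*d) \<and> (n < d \<longrightarrow> fps_nth (r * f) n = 0)"
        by blast }
    then show ?thesis by (simp add: Jd_def)
  qed
  show ?thesis unfolding idl_def using m I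
    by (auto simp: Jd_def idl_0 idl_add idl_uminus)
qed

lemma Jd_mult: assumes f: "f \<in> Jd d" and g: "g \<in> Jd d" shows "f * g \<in> Jd (2*d)"
proof -
  have I: "idl (ideal_power Sigma_ideal (2*(2*d)))" by (rule idl_ideal_power[OF idl_Sigma])
  { fix n
    have "fps_nth (f * g) n \<in> ideal_power Sigma_ideal (2*(2*d))"
      unfolding fps_mult_nth
    proof (rule idl_sum[OF I])
      fix i
      have "fps_nth f i * fps_nth g (n - i) \<in> ideal_power Sigma_ideal (2*d + 2*d)"
        using f g by (intro ip_mult[OF idl_Sigma]) (auto simp: Jd_def)
      then show "fps_nth f i * fps_nth g (n - i) \<in> ideal_power Sigma_ideal (2*(2*d))"
        by (simp add: mult_2)
    qed
    moreover have "n < 2*d \<Longrightarrow> fps_nth (f * g) n = 0"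
      unfolding fps_mult_nth
    proof (intro sum.neutral ballI)
      fix i assume n: "n < 2*d" and i: "i \<in> {0..n}"
      show "fps_nth f i * fps_nth g (n - i) = 0"
      proof (cases "i < d")
        case True then show ?thesis using f by (simp add: Jd_def)
      next
        case False then have "n - i < d" using n i by auto
        then show ?thesis using g by (simp add: Jd_def)
      qed
    qed
    ultimately have "fps_nth (f * g) n \<in> ideal_power Sigma_ideal (2*(2*d)) \<and> (n < 2*d \<longrightarrow> fps_nth (f * g) n = 0)"
      by blast }
  then show ?thesis by (simp add: Jd_def)
qed

lemma CS_mult: assumes f: "f \<in> CS Sigma_ideal" and g: "g \<in> CS Sigma_ideal"
  shows "f * g \<in> CS (ideal_power Sigma_ideal 2)"
proof -
  have I: "idl (ideal_power Sigma_ideal 2)" by (rule idl_ideal_power[OF idl_Sigma])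
  { fix n
    have "fps_nth (f * g) n \<in> ideal_power Sigma_ideal 2"
      unfolding fps_mult_nth
    proof (rule idl_sum[OF I])
      fix i
      have "fps_nth f i * fps_nth g (n - i) \<in> ideal_power Sigma_ideal (1 + 1)"
        using f g by (intro ip_mult[OF idl_Sigma] ip_1) (auto simp: CS_def)
      then show "fps_nth f i * fps_nth g (n - i) \<in> ideal_power Sigma_ideal 2"
        by (simp only: one_add_one)
    qed }
  then show ?thesis by (simp add: CS_def)
qed

section \<open>Matrix ideals\<close>

definition MS :: "'a set \<Rightarrow> ('a^2^2) set" where "MS J = {A. \<forall>i j. A $ i $ j \<in> J}"

lemma MS_I: "A $ 1 $ 1 \<in> J \<Longrightarrow> A $ 1 $ 2 \<in> J \<Longrightarrow> A $ 2 $ 1 \<in> J \<Longrightarrow> A $ 2 $ 2 \<in> J \<Longrightarrow> A \<in> MS J"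
  by (simp add: MS_def forall_2)

lemma MS_D: "A \<in> MS J \<Longrightarrow> A $ i $ j \<in> J" by (simp add: MS_def)

lemma MS_prod:
  assumes m: "\<And>a b. a \<in> J1 \<Longrightarrow> b \<in> J2 \<Longrightarrow> a * b \<in> J3" and I: "idl J3"
    and A: "A \<in> MS J1" and B: "B \<in> MS J2"
  shows "A ** B \<in> MS J3"
  using A B by (auto simp: MS_def matrix_matrix_mult_def sum_2 intro!: idl_add[OF I] m)

lemma MS_multl: "idl J \<Longrightarrow> A \<in> MS J \<Longrightarrow> A ** B \<in> MS J"
  by (rule MS_prod[of J UNIV]) (auto simp: idl_multr MS_def)

lemma MS_multr: "idl J \<Longrightarrow> A \<in> MS J \<Longrightarrow> B ** A \<in> MS J"
  by (rule MS_prod[of UNIV J]) (auto simp: idl_multl MS_def)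

lemma MS_add: "idl J \<Longrightarrow> A \<in> MS J \<Longrightarrow> B \<in> MS J \<Longrightarrow> A + B \<in> MS J"
  by (auto simp: MS_def idl_add)
lemma MS_diff: "idl J \<Longrightarrow> A \<in> MS J \<Longrightarrow> B \<in> MS J \<Longrightarrow> A - B \<in> MS J"
  by (auto simp: MS_def idl_diff)
lemma MS_uminus: "idl J \<Longrightarrow> A \<in> MS J \<Longrightarrow> - A \<in> MS J"
  by (auto simp: MS_def idl_uminus)
lemma MS_0: "idl J \<Longrightarrow> 0 \<in> MS J"
  by (auto simp: MS_def idl_0)

lemma mm_diff_left: "(A - B) ** C = A ** C - B ** (C :: 'a::comm_ring_1^2^2)"
  by (simp add: vec_eq_iff matrix_matrix_mult_def sum_2 algebra_simps)
lemma mm_diff_right: "C ** (A - B) = C ** A - C ** (B :: 'a::comm_ring_1^2^2)"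
  by (simp add: vec_eq_iff matrix_matrix_mult_def sum_2 algebra_simps)
lemma mm_add_left: "(A + B) ** C = A ** C + B ** (C :: 'a::comm_ring_1^2^2)"
  by (simp add: vec_eq_iff matrix_matrix_mult_def sum_2 algebra_simps)

definition QN :: "'a::comm_ring_1 set \<Rightarrow> 'a^2^2 \<Rightarrow> bool" where
  "QN J M \<longleftrightarrow> M - mat 1 \<in> MS J"

lemma QN_one: "idl J \<Longrightarrow> QN J (mat 1)" by (simp add: QN_def MS_0)

lemma QN_mult: assumes I: "idl J" and A: "QN J A" and B: "QN J B" shows "QN J (A ** B)"
proof -
  have e: "A ** B - mat 1 = (A - mat 1) ** B + (B - mat 1)"
    by (simp add: mm_diff_left)
  show ?thesis using A B unfolding QN_def e by (intro MS_add[OF I] MS_multl[OF I])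
qed

lemma QN_inv: assumes I: "idl J" and A: "QN J A" and AB: "A ** B = mat 1" shows "QN J B"
proof -
  have e: "B - mat 1 = - ((A - mat 1) ** B)"
    by (simp add: mm_diff_left AB)
  show ?thesis using A unfolding QN_def e by (intro MS_uminus[OF I] MS_multl[OF I])
qed

lemma comm_id:
  fixes A B A' B' :: "'a::comm_ring_1^2^2"
  assumes AA: "A ** A' = mat 1" and BB: "B ** B' = mat 1"
  shows "A ** B ** A' ** B' - mat 1
    = ((A - mat 1) ** (B - mat 1) - (B - mat 1) ** (A - mat 1)) ** (A' ** B')"
proof -
  have e: "(A - mat 1) ** (B - mat 1) - (B - mat 1) ** (A - mat 1) = A ** B - B ** A"
    by (simp add: mm_diff_left mm_diff_right)
  have 1: "B ** A ** (A' ** B') = mat 1"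
    by (metis AA BB matrix_mul_assoc matrix_mul_lid)
  have 2: "A ** B ** (A' ** B') = A ** B ** A' ** B'"
    by (simp add: matrix_mul_assoc)
  have "((A - mat 1) ** (B - mat 1) - (B - mat 1) ** (A - mat 1)) ** (A' ** B')
      = (A ** B - B ** A) ** (A' ** B')" by (simp only: e)
  also have "\<dots> = A ** B ** (A' ** B') - B ** A ** (A' ** B')" by (rule mm_diff_left)
  also have "\<dots> = A ** B ** A' ** B' - mat 1" by (simp only: 1 2)
  finally show ?thesis by simp
qed

lemma QN_comm:
  assumes A: "QN (Jd d) A" and B: "QN (Jd d) B" and AA: "A ** A' = mat 1" and BB: "B ** B' = mat 1"
  shows "QN (Jd (2*d)) (A ** B ** A' ** B')"
proof -
  have p: "a * b \<in> Jd (2*d)" if "a \<in> Jd d" "b \<in> Jd d" for a b using Jd_mult that by blast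
  have "(A - mat 1) ** (B - mat 1) - (B - mat 1) ** (A - mat 1) \<in> MS (Jd (2*d))"
    using A B unfolding QN_def by (intro MS_diff[OF idl_Jd] MS_prod[OF p idl_Jd])
  then show ?thesis unfolding QN_def comm_id[OF AA BB] by (rule MS_multl[OF idl_Jd])
qed

section \<open>Level zero and augmentation structure\<close>

definition u1 :: R where "u1 = 1 - yR"
definition u2 :: R where "u2 = xR - 1"

definition rk1 :: "R \<Rightarrow> R \<Rightarrow> R^2^2" where
  "rk1 r1 r2 = mat2 (1 + u1*r1) (u1*r2) (u2*r1) (1 + u2*r2)"

lemma rk1_mult: "rk1 r1 r2 ** rk1 q1 q2 =
   rk1 (r1 + q1 + (u1*r1 + u2*r2) * q1) (r2 + q2 + (u1*r1 + u2*r2) * q2)"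
  by (simp add: rk1_def mat2_mult mat2_eq_iff algebra_simps)

lemma rk1_inv:
  assumes "rk1 r1 r2 ** B = mat 1"
  shows "B = rk1 (-(r1 * B$1$1 + r2 * B$2$1)) (-(r1 * B$1$2 + r2 * B$2$2))"
proof -
  obtain b11 b12 b21 b22 where B: "B = mat2 b11 b12 b21 b22" using mat2_eta by blast
  from assms have e: "(1 + u1*r1)*b11 + u1*r2*b21 = 1" "(1 + u1*r1)*b12 + u1*r2*b22 = 0"
    "u2*r1*b11 + (1+u2*r2)*b21 = 0" "u2*r1*b12 + (1+u2*r2)*b22 = 1"
    by (simp_all add: B rk1_def mat2_mult mat2_one mat2_eq_iff)
  have "b11 - (1 + u1 * -(r1*b11 + r2*b21)) = (1 + u1*r1)*b11 + u1*r2*b21 - 1"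
    "b12 - u1 * -(r1*b12 + r2*b22) = (1 + u1*r1)*b12 + u1*r2*b22"
    "b21 - u2 * -(r1*b11 + r2*b21) = u2*r1*b11 + (1+u2*r2)*b21"
    "b22 - (1 + u2 * -(r1*b12 + r2*b22)) = u2*r1*b12 + (1+u2*r2)*b22 - 1"
    by (simp_all add: algebra_simps)
  then show ?thesis unfolding B rk1_def mat2_eq_iff mat2_nth
    using e by simp
qed

lemma rk1_inv_dot:
  assumes "rk1 r1 r2 ** B = mat 1" "B ** rk1 r1 r2 = mat 1" "u1*r1 + u2*r2 = 0"
  shows "u1 * (-(r1 * B$1$1 + r2 * B$2$1)) + u2 * (-(r1 * B$1$2 + r2 * B$2$2)) = 0"
proof -
  obtain b11 b12 b21 b22 where B: "B = mat2 b11 b12 b21 b22" using mat2_eta by blast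
  from assms have e: "b11*(1 + u1*r1) + b12*(u2*r1) - 1 = 0" "b11*(u1*r2) + b12*(1+u2*r2) = 0"
    "b21*(1 + u1*r1) + b22*(u2*r1) = 0" "b21*(u1*r2) + b22*(1+u2*r2) - 1 = 0" "u1*r1 + u2*r2 = 0"
    by (simp_all add: B rk1_def mat2_mult mat2_one mat2_eq_iff)
  have "u1 * (-(r1 * b11 + r2 * b21)) + u2 * (-(r1 * b12 + r2 * b22)) =
     - r1 * (u1 * (b11*(1 + u1*r1) + b12*(u2*r1) - 1) + u2 * (b11*(u1*r2) + b12*(1+u2*r2))
              - (u1*b11+u2*b12) * (u1*r1 + u2*r2))
     - r2 * (u1 * (b21*(1 + u1*r1) + b22*(u2*r1)) + u2 * (b21*(u1*r2) + b22*(1+u2*r2) - 1)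
              - (u1*b21+u2*b22) * (u1*r1 + u2*r2))
     - (u1*r1 + u2*r2)"
    by (simp add: algebra_simps)
  then show ?thesis unfolding B mat2_nth using e by simp
qed

lemma det_rk1: "det (rk1 r1 r2) = 1 + u1*r1 + u2*r2"
  by (simp add: det_2 rk1_def algebra_simps)

definition Lf :: "int fps \<Rightarrow> int fps^2^2" where "Lf c = mat2 c 0 (1 - c) 1"

lemma Lf_mult: "Lf c ** Lf c' = Lf (c * c')"
  by (simp add: Lf_def mat2_mult mat2_eq_iff algebra_simps)

lemma Lf_inv:
  assumes "Lf c ** B = mat 1" "B ** Lf c = mat 1"
  shows "B = Lf (B$1$1)"
proof -
  obtain b11 b12 b21 b22 where B: "B = mat2 b11 b12 b21 b22" using mat2_eta by blast
  from assms have e: "c * b11 = 1" "(1-c)*b11 + b21 = 0" "(1-c)*b12 + b22 = 1"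
     "b12 = 0"
    by (simp_all add: B Lf_def mat2_mult mat2_one mat2_eq_iff)
  have "b21 - (1 - b11) = ((1-c)*b11 + b21) + (c * b11 - 1)" by (simp add: algebra_simps)
  then have "b21 = 1 - b11" using e by simp
  then show ?thesis unfolding B Lf_def mat2_eq_iff mat2_nth
    using e by simp
qed

definition ev0M :: "R fps^2^2 \<Rightarrow> R^2^2" where "ev0M = MapM (\<lambda>f. fps_nth f 0)"
definition piM :: "R fps^2^2 \<Rightarrow> int fps^2^2" where "piM = MapM piF"

lemma ev0M_mult: "ev0M (A ** B) = ev0M A ** ev0M B"
  unfolding ev0M_def by (rule MapM_mult) simp_all
lemma ev0M_one: "ev0M (mat 1) = mat 1"
  unfolding ev0M_def by (rule MapM_one) simp_all
lemma ev0M_diff: "ev0M (A - B) = ev0M A - ev0M B"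
  unfolding ev0M_def by (rule MapM_diff) simp
lemma piM_mult: "piM (A ** B) = piM A ** piM B"
  unfolding piM_def by (rule MapM_mult) (simp_all add: piF_add piF_mult)
lemma piM_one: "piM (mat 1) = mat 1"
  unfolding piM_def by (rule MapM_one) (simp_all add: piF_0 piF_1)
lemma piM_diff: "piM (A - B) = piM A - piM B"
  unfolding piM_def by (rule MapM_diff) (simp add: piF_diff)

definition Q0 :: "R fps^2^2 \<Rightarrow> bool" where
  "Q0 M \<longleftrightarrow> (\<exists>r1 r2. ev0M M = rk1 r1 r2) \<and> (\<exists>c. piM M = Lf c)"

definition Q1 :: "R fps^2^2 \<Rightarrow> bool" where
  "Q1 M \<longleftrightarrow> (\<exists>r1 r2. ev0M M = rk1 r1 r2 \<and> u1*r1 + u2*r2 = 0) \<and> QN (CS Sigma_ideal) M"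

lemma rk1_one: "rk1 0 0 = mat 1" by (simp add: rk1_def mat2_one)
lemma Lf_one: "Lf 1 = mat 1" by (simp add: Lf_def mat2_one)

lemma Q0_inv:
  assumes Q: "Q0 A" and AB: "A ** B = mat 1" and BA: "B ** A = mat 1" shows "Q0 B"
proof -
  from Q obtain r1 r2 c where r: "ev0M A = rk1 r1 r2" and c: "piM A = Lf c" by (auto simp: Q0_def)
  have "rk1 r1 r2 ** ev0M B = mat 1" using AB r by (metis ev0M_mult ev0M_one)
  moreover have "Lf c ** piM B = mat 1" "piM B ** Lf c = mat 1"
    using AB BA c by (metis piM_mult piM_one)+
  ultimately show "Q0 B" unfolding Q0_def using rk1_inv Lf_inv by blast
qed

lemma Q0_sub: "subgroup (SubQ Q0) GL2"
proof (rule SubQ_subgroup)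
  show "Q0 (mat 1)" unfolding Q0_def ev0M_one piM_one using rk1_one Lf_one by metis
next
  fix A B assume "Q0 A" "Q0 B"
  then obtain r1 r2 c q1 q2 c' where "ev0M A = rk1 r1 r2" "piM A = Lf c" "ev0M B = rk1 q1 q2" "piM B = Lf c'"
    unfolding Q0_def by blast
  then show "Q0 (A ** B)"
    by (simp add: Q0_def ev0M_mult piM_mult rk1_mult Lf_mult; blast)
next
  fix A B assume "Q0 A" "A ** B = mat 1" "B ** A = mat 1"
  then show "Q0 B" by (rule Q0_inv)
qed

lemma Q1_sub: "subgroup (SubQ Q1) GL2"
proof (rule SubQ_subgroup)
  show "Q1 (mat 1)" unfolding Q1_def ev0M_one using rk1_one QN_one[OF idl_CS[OF idl_Sigma]]
    by (metis add_0 mult_zero_right)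
next
  fix A B assume a: "Q1 A" "Q1 B"
  then obtain r1 r2 q1 q2 where r: "ev0M A = rk1 r1 r2" "u1*r1 + u2*r2 = 0" "ev0M B = rk1 q1 q2" "u1*q1 + u2*q2 = 0"
    unfolding Q1_def by blast
  have "u1*(r1+q1) + u2*(r2+q2) = (u1*r1 + u2*r2) + (u1*q1 + u2*q2)" by (simp add: algebra_simps)
  then have "ev0M (A ** B) = rk1 (r1 + q1) (r2 + q2)" "u1*(r1+q1) + u2*(r2+q2) = 0"
    using r by (simp_all add: ev0M_mult rk1_mult)
  then show "Q1 (A ** B)"
    using a unfolding Q1_def using QN_mult[OF idl_CS[OF idl_Sigma]] by blast
next
  fix A B assume Q: "Q1 A" and AB: "A ** B = mat 1" and BA: "B ** A = mat 1"
  from Q obtain r1 r2 where r: "ev0M A = rk1 r1 r2" "u1*r1 + u2*r2 = 0" and q: "QN (CS Sigma_ideal) A"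
    by (auto simp: Q1_def)
  have "rk1 r1 r2 ** ev0M B = mat 1" "ev0M B ** rk1 r1 r2 = mat 1"
    using AB BA r by (metis ev0M_mult ev0M_one)+
  then show "Q1 B" unfolding Q1_def
    using rk1_inv rk1_inv_dot r(2) QN_inv[OF idl_CS[OF idl_Sigma] q AB] by blast
qed

lemma mat2_zero: "(0::'a::comm_ring_1^2^2) = mat2 0 0 0 0" by (rule mat2_eqI) simp_all

lemma comm_Q0_Q1:
  assumes A: "Q0 A" and B: "Q0 B" and AA: "A ** A' = mat 1" "A' ** A = mat 1"
    and BB: "B ** B' = mat 1" "B' ** B = mat 1"
  shows "Q1 (A ** B ** A' ** B')"
proof -
  have A': "Q0 A'" using Q0_inv[OF A AA] .
  have B': "Q0 B'" using Q0_inv[OF B BB] .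
  obtain a1 a2 a where ra: "ev0M A = rk1 a1 a2" and la: "piM A = Lf a" using A unfolding Q0_def by blast
  obtain b1 b2 b where rb: "ev0M B = rk1 b1 b2" and lb: "piM B = Lf b" using B unfolding Q0_def by blast
  obtain c1 c2 c where rc: "ev0M A' = rk1 c1 c2" and lc: "piM A' = Lf c" using A' unfolding Q0_def by blast
  obtain d1 d2 d where rd: "ev0M B' = rk1 d1 d2" and ld: "piM B' = Lf d" using B' unfolding Q0_def by blast
  note r = ra rb rc rd
  note l = la lb lc ld
  let ?C = "A ** B ** A' ** B'"
  have "ev0M ?C = rk1 a1 a2 ** rk1 b1 b2 ** rk1 c1 c2 ** rk1 d1 d2"
    by (simp only: ev0M_mult r)
  then obtain r1 r2 where rC: "ev0M ?C = rk1 r1 r2"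
    by (simp only: rk1_mult)
  have dA: "det (ev0M A) * det (ev0M A') = 1"
    by (simp only: det_mul[symmetric] ev0M_mult[symmetric] AA ev0M_one det_I)
  have dB: "det (ev0M B) * det (ev0M B') = 1"
    by (simp only: det_mul[symmetric] ev0M_mult[symmetric] BB ev0M_one det_I)
  have "det (ev0M ?C) = (det (ev0M A) * det (ev0M A')) * (det (ev0M B) * det (ev0M B'))"
    by (simp add: ev0M_mult det_mul mult_ac)
  then have "det (ev0M ?C) = 1" using dA dB by simp
  then have dot: "u1*r1 + u2*r2 = 0" using rC det_rk1 by (simp add: add.assoc)
  have h: "Lf (a * c) = mat 1" "Lf (b * d) = mat 1"
    by (simp only: Lf_mult[symmetric] l[symmetric] piM_mult[symmetric] AA BB piM_one)+
  have "piM ?C = Lf (a*b*c*d)" by (simp add: piM_mult l Lf_mult)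
  also have "\<dots> = Lf (a*c) ** Lf (b*d)" by (simp add: Lf_mult mult_ac)
  also have "\<dots> = mat 1" by (simp add: h)
  finally have "piM ?C = mat 1" .
  then have p0: "piM (?C - mat 1) = 0" by (simp add: piM_diff piM_one)
  have "?C - mat 1 \<in> MS (CS Sigma_ideal)"
  proof -
    { fix i j n
      have "piF ((?C - mat 1) $ i $ j) = 0" using p0 by (simp add: piM_def vec_eq_iff)
      moreover have "augR (fps_nth ((?C - mat 1) $ i $ j) n) = fps_nth (piF ((?C - mat 1) $ i $ j)) n"
        by (rule piF_nth[symmetric])
      ultimately have "augR (fps_nth ((?C - mat 1) $ i $ j) n) = 0" by simp
      then have "fps_nth ((?C - mat 1) $ i $ j) n \<in> Sigma_ideal" by (simp add: Sigma_ideal_def) }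
    then show ?thesis by (simp add: MS_def CS_def)
  qed
  then show ?thesis unfolding Q1_def QN_def using rC dot by blast
qed

lemma rk1_prod0:
  assumes "u1*r1 + u2*r2 = 0"
  shows "(rk1 r1 r2 - mat 1) ** (rk1 q1 q2 - mat 1) = 0"
proof -
  have "(rk1 r1 r2 - mat 1) ** (rk1 q1 q2 - mat 1) =
     mat2 (u1*q1*(u1*r1 + u2*r2)) (u1*q2*(u1*r1 + u2*r2)) (u2*q1*(u1*r1 + u2*r2)) (u2*q2*(u1*r1 + u2*r2))"
    by (simp add: rk1_def mat2_one mat2_diff mat2_mult mat2_eq_iff algebra_simps)
  then show ?thesis using assms by (simp add: mat2_zero)
qed

lemma comm_Q1_N1:
  assumes A: "Q1 A" and B: "Q1 B" and AA: "A ** A' = mat 1" and BB: "B ** B' = mat 1"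
  shows "QN (Jd 1) (A ** B ** A' ** B')"
proof -
  obtain r1 r2 q1 q2 where r: "ev0M A = rk1 r1 r2" "u1*r1 + u2*r2 = 0" "ev0M B = rk1 q1 q2" "u1*q1 + u2*q2 = 0"
    and X: "A - mat 1 \<in> MS (CS Sigma_ideal)" and Y: "B - mat 1 \<in> MS (CS Sigma_ideal)"
    using A B unfolding Q1_def QN_def by blast
  let ?D = "(A - mat 1) ** (B - mat 1) - (B - mat 1) ** (A - mat 1)"
  have I2: "idl (CS (ideal_power Sigma_ideal 2))" by (rule idl_CS[OF idl_ideal_power[OF idl_Sigma]])
  have D2: "?D \<in> MS (CS (ideal_power Sigma_ideal 2))"
    using X Y by (intro MS_diff[OF I2] MS_prod[OF CS_mult I2])
  have D0: "ev0M ?D = 0"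
    unfolding ev0M_diff ev0M_mult ev0M_one r using rk1_prod0 r(2,4) by simp
  have "?D \<in> MS (Jd 1)"
  proof -
    { fix i j n
      have "fps_nth (?D $ i $ j) n \<in> ideal_power Sigma_ideal 2"
        using D2 by (simp add: MS_def CS_def)
      moreover have "fps_nth (?D $ i $ j) 0 = 0" using D0
        by (simp add: ev0M_def vec_eq_iff)
      ultimately have "fps_nth (?D $ i $ j) n \<in> ideal_power Sigma_ideal (2*1) \<and> (n < 1 \<longrightarrow> fps_nth (?D $ i $ j) n = 0)"
        by simp }
    then show ?thesis by (simp add: MS_def Jd_def)
  qed
  then show ?thesis unfolding QN_def comm_id[OF AA BB] by (rule MS_multl[OF idl_Jd])
qed

section \<open>Generators\<close>

lemma inv_upper:
  fixes b x xi :: "'a::comm_ring_1"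
  assumes "x * xi = 1"
  shows "mat2 1 b 0 x ** mat2 1 (-(b*xi)) 0 xi = mat 1" "mat2 1 (-(b*xi)) 0 xi ** mat2 1 b 0 x = mat 1"
proof -
  have "- (b * xi * x) + b = b * (1 - x * xi)" by (simp add: algebra_simps)
  then show "mat2 1 b 0 x ** mat2 1 (-(b*xi)) 0 xi = mat 1" "mat2 1 (-(b*xi)) 0 xi ** mat2 1 b 0 x = mat 1"
    using assms by (simp_all add: mat2_mult mat2_one mult.commute)
qed

lemma inv_lower:
  fixes c w wi :: "'a::comm_ring_1"
  assumes "w * wi = 1"
  shows "mat2 w 0 c 1 ** mat2 wi 0 (-(c*wi)) 1 = mat 1" "mat2 wi 0 (-(c*wi)) 1 ** mat2 w 0 c 1 = mat 1"
proof -
  have "- (c * wi * w) + c = c * (1 - w * wi)" by (simp add: algebra_simps)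
  then show "mat2 w 0 c 1 ** mat2 wi 0 (-(c*wi)) 1 = mat 1" "mat2 wi 0 (-(c*wi)) 1 ** mat2 w 0 c 1 = mat 1"
    using assms by (simp_all add: mat2_mult mat2_one mult.commute)
qed

lemma constT_mult: "constT a * constT b = constT (a * b)"
  by (simp add: constT_def mult_single)

lemma constT_one: "constT 1 = 1" by (simp add: constT_def)

lemma x_unit: "xR * Poly_Mapping.single (-1, 0) 1 = 1"
  by (simp add: xR_def mult_single zero_prod_def[symmetric])
lemma y_unit: "yR * Poly_Mapping.single (0, -1) 1 = 1"
  by (simp add: yR_def mult_single zero_prod_def[symmetric])
lemma t_unit: "tT * Poly_Mapping.single (-1) 1 = 1"
  by (simp add: tT_def mult_single)

lemma M1_carrier: "M1 \<in> carrier GL2"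
proof -
  have "constT xR * constT (Poly_Mapping.single (-1, 0) 1) = 1"
    by (simp add: constT_mult x_unit constT_one)
  then show ?thesis unfolding M1_def GL2_def using inv_upper by fastforce
qed

lemma M2T_carrier: "M2T \<in> carrier GL2"
proof -
  have "(constT yR * tT) * (constT (Poly_Mapping.single (0, -1) 1) * Poly_Mapping.single (-1) 1) =
        (constT yR * constT (Poly_Mapping.single (0, -1) 1)) * (tT * Poly_Mapping.single (-1) 1)"
    by (simp add: mult_ac)
  also have "\<dots> = 1" by (simp add: constT_mult y_unit t_unit constT_one)
  finally show ?thesis unfolding M2T_def GL2_def using inv_lower by fastforce
qed

lemma embed_constT: "embed_fps (constT r) = fps_const r"
  by (simp add: constT_def embed_single tpow_fps_def)

lemma embed_tT: "embed_fps tT = 1 + fps_X"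
  by (simp add: tT_def embed_single tpow_fps_def)

lemma Phi_mat2: "Phi (mat2 a b c d) = mat2 (embed_fps a) (embed_fps b) (embed_fps c) (embed_fps d)"
  by (simp add: Phi_def MapM_mat2)

lemma Phi_M1: "Phi M1 = mat2 1 (fps_const (1 - yR)) 0 (fps_const xR)"
  by (simp add: M1_def Phi_mat2 embed_1 embed_0 embed_constT)

lemma Phi_M2T: "Phi M2T = mat2 (fps_const yR * (1 + fps_X)) 0 (1 - fps_const xR * (1 + fps_X)) 1"
  by (simp add: M2T_def Phi_mat2 embed_1 embed_0 embed_constT embed_mult embed_diff embed_tT)

lemma Q0_M1: "Q0 (Phi M1)"
proof -
  have "ev0M (Phi M1) = rk1 0 1"
    by (simp add: Phi_M1 ev0M_def MapM_mat2 rk1_def u1_def u2_def)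
  moreover have "piM (Phi M1) = Lf 1"
    by (simp add: Phi_M1 piM_def MapM_mat2 Lf_def piF_1 piF_0 piF_const aug_diff aug_1 aug_x aug_y)
  ultimately show ?thesis unfolding Q0_def by blast
qed

lemma Q0_M2T: "Q0 (Phi M2T)"
proof -
  have "ev0M (Phi M2T) = rk1 (-1) 0"
    by (simp add: Phi_M2T ev0M_def MapM_mat2 rk1_def u1_def u2_def)
  moreover have "piM (Phi M2T) = Lf (1 + fps_X)"
    by (simp add: Phi_M2T piM_def MapM_mat2 Lf_def piF_1 piF_0 piF_const piF_mult piF_diff piF_add piF_X
        aug_x aug_y)
  ultimately show ?thesis unfolding Q0_def by blast
qed

lemma Fgrp_Q0: "Fgrp \<subseteq> SubQ Q0"
  unfolding Fgrp_def
  by (rule group.generate_subgroup_incl[OF GL2_group _ Q0_sub])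
     (auto simp: SubQ_def M1_carrier M2T_carrier Q0_M1 Q0_M2T)

lemma QN_sub: "subgroup (SubQ (QN (Jd d))) GL2"
  by (rule SubQ_subgroup) (auto intro: QN_one QN_mult QN_inv idl_Jd)

lemma Fderived_N: "2 \<le> k \<Longrightarrow> Fderived k \<subseteq> SubQ (QN (Jd (2 ^ (k - 2))))"
proof (induction k rule: dec_induct)
  case base
  have "derived GL2 Fgrp \<subseteq> SubQ Q1"
    by (rule derived_SubQ[OF Fgrp_Q0 Q1_sub comm_Q0_Q1])
  then have "derived GL2 (derived GL2 Fgrp) \<subseteq> SubQ (QN (Jd 1))"
    by (rule derived_SubQ[OF _ QN_sub comm_Q1_N1])
  then show ?case by (simp add: Fderived_def numeral_2_eq_2)
next
  case (step k)
  have "derived GL2 (Fderived k) \<subseteq> SubQ (QN (Jd (2 * 2 ^ (k - 2))))"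
    by (rule derived_SubQ[OF step.IH QN_sub QN_comm])
  moreover have "2 * 2 ^ (k - 2) = (2::nat) ^ (Suc k - 2)"
  proof -
    have "Suc k - 2 = Suc (k - 2)" using step.hyps(1) by simp
    then show ?thesis by simp
  qed
  ultimately show ?case by (simp add: Fderived_def)
qed

theorem lemma7:
  fixes k :: nat and g :: "RT^2^2"
  assumes "k > 1"
    and "g \<in> Fderived k"
  shows "coeff_mat g 0 = mat 1
       \<and> (\<forall>i. 0 < i \<and> i < 2 ^ (k - 2) \<longrightarrow> coeff_mat g i = 0)
       \<and> (\<forall>i \<ge> 2 ^ (k - 2). \<forall>a b. coeff_mat g i $ a $ b \<in> ideal_power Sigma_ideal (2 * 2 ^ (k - 2)))"
proof -
  define d :: nat where "d = 2 ^ (k - 2)"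
  have d1: "1 \<le> d" by (simp add: d_def)
  have "g \<in> SubQ (QN (Jd d))" using Fderived_N[of k] assms by (auto simp: d_def)
  then have E: "Phi g - mat 1 \<in> MS (Jd d)" by (simp add: SubQ_def QN_def)
  have c: "coeff_mat g i $ a $ b = fps_nth ((Phi g - mat 1) $ a $ b) i + fps_nth ((mat 1 :: R fps^2^2) $ a $ b) i"
    for i a b by (simp add: coeff_mat_def Phi_def)
  have E0: "i < d \<Longrightarrow> fps_nth ((Phi g - mat 1) $ a $ b) i = 0" for i a b
    using MS_D[OF E, of a b] by (simp add: Jd_def)
  have EI: "fps_nth ((Phi g - mat 1) $ a $ b) i \<in> ideal_power Sigma_ideal (2 * d)" for i a b
    using MS_D[OF E, of a b] by (simp add: Jd_def)
  have m1: "fps_nth ((mat 1 :: R fps^2^2) $ a $ b) i = (if i = 0 then (mat 1 :: R^2^2) $ a $ b else 0)" for i a b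
    by (simp add: mat_def)
  have "coeff_mat g 0 = mat 1"
    unfolding vec_eq_iff using c E0 d1 m1 by simp
  moreover have "\<forall>i. 0 < i \<and> i < d \<longrightarrow> coeff_mat g i = 0"
    unfolding vec_eq_iff using c E0 m1 by simp
  moreover have "\<forall>i \<ge> d. \<forall>a b. coeff_mat g i $ a $ b \<in> ideal_power Sigma_ideal (2 * d)"
  proof (intro allI impI)
    fix i a b assume "d \<le> i"
    then have "i \<noteq> 0" using d1 by simp
    then have "coeff_mat g i $ a $ b = fps_nth ((Phi g - mat 1) $ a $ b) i"
      by (simp only: c m1 if_False add_0_right)
    then show "coeff_mat g i $ a $ b \<in> ideal_power Sigma_ideal (2 * d)"
      using EI by metis
  qed
  ultimately show ?thesis by (simp add: d_def)
qed

end
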